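(* The pair of graded graphs $(\mathbf{Motz}_\bullet,\mathbf{U},\mathbf{V})$ is $\phi$-diagonal dual, i.e. $\mathbf{V}^\star\mathbf{U}-\mathbf{U}\mathbf{V}^\star=\phi$, for the linear map $\phi$ defined by $$\phi(u)=\big(2+\#\{i\in[|u|-1] : u_i\ne u_{i+1}\}\big)\,u$$ for every $u\in\mathbf{Motz}$.
   Context: $\mathbb{K}$ is a field of characteristic zero. $\mathbf{Motz}$ is the set of all nonempty words $u=u_1\cdots u_n$ of nonnegative integers with $u_1=u_n=0$ and $|u_{i+1}-u_i|\le1$ for all $i$ (the elements of the operad of Motzkin paths, generated by $00$ and $010$). $\mathbf{Motz}_\bullet$ is this set graded by the degree $\#\{i\in[n-1] : u_{i+1}\ge u_i\}$ (number of flat and up steps). The prefix graph and twisted prefix graph of this operad are given by the linear maps on $\mathbb{K}\langle\mathbf{Motz}\rangle$ (basis: these words) $$\mathbf{U}(u)=\sum_{i\in[|u|]}\big(u_1\cdots u_i\,u_i\,u_{i+1}\cdots u_{|u|}+u_1\cdots u_i\,(u_i+1)\,u_i\,u_{i+1}\cdots u_{|u|}\big),$$ $$\mathbf{V}(u)=\sum_{\substack{i\in[|u|]\\ i=|u|\text{ or } u_i>u_{i+1}}}\big(u_1\cdots u_i\,u_i\,u_{i+1}\cdots u_{|u|}+u_1\cdots u_i\,(u_i+1)\,u_i\,u_{i+1}\cdots u_{|u|}\big).$$ $\mathbf{V}^\star$ is the adjoint of $\mathbf{V}$ for the scalar product making the words orthonormal. *)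

theory Defs
  imports Main
begin

text \<open>Words are lists of naturals, positions are 0-based: u!0 = u_1, ..., u!(length u - 1) = u_n.\<close>

definition motz :: "nat list \<Rightarrow> bool" where
  "motz u \<longleftrightarrow> u \<noteq> [] \<and> hd u = 0 \<and> last u = 0 \<and>
     (\<forall>i. Suc i < length u \<longrightarrow> u ! Suc i \<le> u ! i + 1 \<and> u ! i \<le> u ! Suc i + 1)"

definition ins_words :: "nat list \<Rightarrow> nat \<Rightarrow> nat list list" where
  "ins_words u i = [take (Suc i) u @ [u ! i] @ drop (Suc i) u,
                    take (Suc i) u @ [u ! i + 1, u ! i] @ drop (Suc i) u]"

text \<open>U(u) and V(u) as lists of words (a sum of basis vectors with multiplicities).\<close>
definition U_list :: "nat list \<Rightarrow> nat list list" where
  "U_list u = concat (map (ins_words u) [0..<length u])"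

definition V_list :: "nat list \<Rightarrow> nat list list" where
  "V_list u = concat (map (ins_words u)
      (filter (\<lambda>i. Suc i = length u \<or> u ! i > u ! Suc i) [0..<length u]))"

text \<open>Vectors of K<Motz>: finitely supported functions from words to K with support in Motz.\<close>
definition in_KMotz :: "(nat list \<Rightarrow> 'k::zero) \<Rightarrow> bool" where
  "in_KMotz f \<longleftrightarrow> finite {u. f u \<noteq> 0} \<and> (\<forall>u. f u \<noteq> 0 \<longrightarrow> motz u)"

definition U_op :: "(nat list \<Rightarrow> 'k::field_char_0) \<Rightarrow> nat list \<Rightarrow> 'k" where
  "U_op f w = (\<Sum>u\<in>{u. motz u \<and> f u \<noteq> 0}. f u * of_nat (count_list (U_list u) w))"

text \<open>Adjoint of V for the scalar product making words orthonormal: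
  coefficient of u in V*(f) is <f, V(u)>.\<close>
definition Vstar_op :: "(nat list \<Rightarrow> 'k::field_char_0) \<Rightarrow> nat list \<Rightarrow> 'k" where
  "Vstar_op f u = (if motz u then
     (\<Sum>w\<in>{w. motz w \<and> f w \<noteq> 0}. f w * of_nat (count_list (V_list u) w)) else 0)"

definition phi_op :: "(nat list \<Rightarrow> 'k::field_char_0) \<Rightarrow> nat list \<Rightarrow> 'k" where
  "phi_op f u = (if motz u then
     of_nat (2 + card {i. Suc i < length u \<and> u ! i \<noteq> u ! Suc i}) * f u else 0)"

end

theory Submission imports Defs "HOL-Library.Multiset" begin

fun IU :: "nat list \<Rightarrow> nat list multiset" where
  "IU [] = {#}"
| "IU (a#r) = {#a#a#r, a#Suc a#a#r#} + image_mset (Cons a) (IU r)"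

definition lt_hd :: "nat list \<Rightarrow> nat \<Rightarrow> bool" where
  "lt_hd s b = (case s of [] \<Rightarrow> True | c#_ \<Rightarrow> c < b)"

fun loc :: "nat \<Rightarrow> nat list \<Rightarrow> nat list multiset" where
  "loc a [] = {#}"
| "loc a [b] = (if a = b then {#[a]#} else {#})"
| "loc a (b#c#s) = (if a = b \<and> c < b then {#a#c#s#} else {#})
     + (if b = Suc a \<and> c = a \<and> lt_hd s a then {#a#s#} else {#})"

fun RV :: "nat list \<Rightarrow> nat list multiset" where
  "RV [] = {#}"
| "RV (a#z) = loc a z + image_mset (Cons a) (RV z)"

fun desc :: "nat list \<Rightarrow> nat" where
  "desc [] = 0"
| "desc [a] = 0"
| "desc (a#b#s) = (if b < a then 1 else 0) + desc (b#s)"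

definition SR :: "nat list multiset \<Rightarrow> nat list multiset" where
  "SR M = \<Sum>\<^sub># (image_mset RV M)"
definition SI :: "nat list multiset \<Rightarrow> nat list multiset" where
  "SI M = \<Sum>\<^sub># (image_mset IU M)"

lemma SR_Cons: "SR (image_mset (Cons a) M) = \<Sum>\<^sub># (image_mset (loc a) M) + image_mset (Cons a) (SR M)"
  by (induction M) (auto simp: SR_def)

lemma SI_Cons: "SI (image_mset (Cons a) M) =
   image_mset (\<lambda>y. a#a#y) M + image_mset (\<lambda>y. a#Suc a#a#y) M + image_mset (Cons a) (SI M)"
  by (induction M) (auto simp: SI_def)

lemma SR_simps[simp]: "SR {#} = {#}" "SR (M + N) = SR M + SR N" "SR (add_mset x M) = RV x + SR M"
  by (auto simp: SR_def)
lemma SI_simps[simp]: "SI {#} = {#}" "SI (M + N) = SI M + SI N" "SI (add_mset x M) = IU x + SI M"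
  by (auto simp: SI_def)

lemma IU_lt_hd: "t \<in># IU s \<Longrightarrow> lt_hd t a = lt_hd s a"
  by (cases s) (auto simp: lt_hd_def)

lemma G: "(\<forall>t\<in>#M. lt_hd t a = P) \<Longrightarrow>
  \<Sum>\<^sub># (image_mset (\<lambda>t. loc a (b#c#t)) M) =
   (if a = b \<and> c < b then image_mset (\<lambda>t. a#c#t) M else {#}) +
   (if b = Suc a \<and> c = a \<and> P then image_mset (Cons a) M else {#})"
  by (induction M) auto

lemma K: "\<Sum>\<^sub># (image_mset (loc a) (IU (b#s))) + image_mset (Cons a) (loc a (b#s))
   + image_mset (Cons a) (image_mset (Cons (Suc a)) (loc a (b#s))) = SI (loc a (b#s))"
proof (cases s)
  case Nil
  then show ?thesis by auto
next
  case (Cons c s')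
  have g: "\<Sum>\<^sub># (image_mset (\<lambda>t. loc a (b#c#t)) (IU s')) =
   (if a = b \<and> c < b then image_mset (\<lambda>t. a#c#t) (IU s') else {#}) +
   (if b = Suc a \<and> c = a \<and> lt_hd s' a then image_mset (Cons a) (IU s') else {#})"
    by (rule G) (auto dest: IU_lt_hd)
  show ?thesis using g unfolding Cons
    by (auto simp: lt_hd_def image_mset.compositionality o_def)
qed

lemma main: "u \<noteq> [] \<Longrightarrow> SR (IU u) = SI (RV u) + replicate_mset (2 + 2 * desc u) u"
proof (induction u)
  case Nil
  then show ?case by simp
next
  case (Cons a r)
  show ?case
  proof (cases r)
    case Nil
    then show ?thesis by (simp add: numeral_2_eq_2 lt_hd_def)
  next
    case (Cons b s)
    have IH: "SR (IU r) = SI (RV r) + replicate_mset (2 + 2 * desc r) r"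
      using Cons.IH Cons by simp
    have k: "\<Sum>\<^sub># (image_mset (loc a) (IU r)) + image_mset (Cons a) (loc a r)
   + image_mset (Cons a) (image_mset (Cons (Suc a)) (loc a r)) = SI (loc a r)"
      using K Cons by simp
    have "SR (IU (a#r)) = RV (a#a#r) + RV (a#Suc a#a#r) + \<Sum>\<^sub># (image_mset (loc a) (IU r))
        + image_mset (Cons a) (SR (IU r))"
      by (simp add: SR_Cons)
    also have "\<dots> = loc a (a#r) + loc a (Suc a#a#r) + image_mset (Cons a) (loc (Suc a) (a#r))
       + (\<Sum>\<^sub># (image_mset (loc a) (IU r)) + image_mset (Cons a) (loc a r)
   + image_mset (Cons a) (image_mset (Cons (Suc a)) (loc a r)))
       + image_mset (\<lambda>y. a#a#y) (RV r) + image_mset (\<lambda>y. a#Suc a#a#y) (RV r)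
       + image_mset (Cons a) (SR (IU r))"
      by (simp add: image_mset.compositionality o_def)
    also have "\<dots> = loc a (a#r) + loc a (Suc a#a#r) + image_mset (Cons a) (loc (Suc a) (a#r))
       + SI (loc a r)
       + image_mset (\<lambda>y. a#a#y) (RV r) + image_mset (\<lambda>y. a#Suc a#a#y) (RV r)
       + image_mset (Cons a) (SI (RV r) + replicate_mset (2 + 2 * desc r) r)"
      using k IH by simp
    also have "\<dots> = SI (RV (a#r)) + replicate_mset (2 + 2 * desc (a#r)) (a#r)"
    proof (cases "b < a")
      case True
      have e: "2 + 2 * desc (a#r) = Suc (Suc (2 + 2 * desc r))" using True Cons by simp
      show ?thesis unfolding e using True unfolding Cons by (simp add: SI_Cons lt_hd_def)
    next
      case False
      show ?thesis using False unfolding Cons by (simp add: SI_Cons lt_hd_def)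
    qed
    finally show ?thesis .
  qed
qed


lemma upt_Suc_Cons: "[0..<Suc n] = 0 # map Suc [0..<n]"
  by (simp add: upt_conv_Cons map_Suc_upt)

lemma ins_words_Cons: "ins_words (a#r) (Suc i) = map (Cons a) (ins_words r i)"
  by (simp add: ins_words_def)

lemma U_list_Cons: "U_list (a#r) = [a#a#r, a#Suc a#a#r] @ map (Cons a) (U_list r)"
  by (simp add: U_list_def upt_Suc_Cons ins_words_def[of "a#r" 0] ins_words_Cons map_concat o_def
      del: upt_Suc)

lemma U_list_Nil: "U_list [] = []" by (simp add: U_list_def)

lemma mset_U_list: "mset (U_list u) = IU u"
  by (induction u) (simp_all add: U_list_Cons U_list_Nil)

lemma concat_ins_Suc: "concat (map (ins_words (a#r) \<circ> Suc) ys) = map (Cons a) (concat (map (ins_words r) ys))"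
  by (induction ys) (simp_all add: ins_words_Cons)

lemma V_list_Cons: "V_list (a#r) = (if r = [] \<or> hd r < a then [a#a#r, a#Suc a#a#r] else [])
   @ map (Cons a) (V_list r)"
proof -
  define Pa where "Pa = (\<lambda>i. Suc i = length (a#r) \<or> (a#r) ! i > (a#r) ! Suc i)"
  define Pr where "Pr = (\<lambda>i. Suc i = length r \<or> r ! i > r ! Suc i)"
  have v: "V_list (a#r) = concat (map (ins_words (a#r)) (filter Pa (0 # map Suc [0..<length r])))"
    unfolding V_list_def Pa_def length_Cons upt_Suc_Cons ..
  have f: "filter Pa (map Suc [0..<length r]) = map Suc (filter Pr [0..<length r])"
    by (simp add: filter_map o_def Pa_def Pr_def)
  have h: "Pa 0 = (r = [] \<or> hd r < a)"
    unfolding Pa_def by (cases r) auto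
  have vr: "V_list r = concat (map (ins_words r) (filter Pr [0..<length r]))"
    unfolding V_list_def Pr_def ..
  show ?thesis
    unfolding v filter.simps(2) f h vr
    by (simp add: ins_words_def[of "a#r" 0] concat_ins_Suc)
qed

lemma count_img_Cons: "count (image_mset (Cons x) M) (a#r) = (if x = a then count M r else 0)"
  by (induction M) auto

lemma count_img_Cons_Nil: "count (image_mset (Cons x) M) [] = 0"
  by (induction M) auto

lemma count_loc: "count (loc x z) (a#r) = (if r = [] \<or> hd r < a then
   (if x#z = a#a#r then 1 else 0) + (if x#z = a#Suc a#a#r then 1 else 0) else 0)"
proof (cases z rule: remdups_adj.cases)
  case 1
  then show ?thesis by simp
next
  case (2 y)
  then show ?thesis by auto
next
  case (3 y c s)
  show ?thesis
  proof (cases r)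
    case Nil
    then show ?thesis using 3 by (auto simp: lt_hd_def)
  next
    case (Cons b r')
    show ?thesis using 3 Cons by (cases s) (auto simp: lt_hd_def)
  qed
qed

lemma count_loc_Nil: "count (loc x z) [] = 0"
  by (cases z rule: remdups_adj.cases) auto

lemma count_RV_Nil: "count (RV w) [] = 0"
  by (induction w) (auto simp: count_loc_Nil count_img_Cons_Nil)

lemma V_dual: "count (mset (V_list u)) w = count (RV w) u"
proof (induction u arbitrary: w)
  case Nil
  then show ?case
    by (simp add: V_list_def count_RV_Nil)
next
  case (Cons a r)
  show ?case
  proof (cases w)
    case Nil
    then show ?thesis by (simp add: V_list_Cons count_img_Cons_Nil)
  next
    case (Cons x z)
    show ?thesis using Cons.IH unfolding Cons
      by (simp add: V_list_Cons count_img_Cons count_loc)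
  qed
qed


fun ok :: "nat list \<Rightarrow> bool" where
  "ok [] = True"
| "ok [a] = True"
| "ok (a#b#r) = (b \<le> Suc a \<and> a \<le> Suc b \<and> ok (b#r))"

lemma all_nat_split: "(\<forall>i. Q i) = (Q 0 \<and> (\<forall>i. Q (Suc i)))"
  by (metis not0_implies_Suc)

lemma idx_ok: "(\<forall>i. Suc i < length u \<longrightarrow> u ! Suc i \<le> u ! i + 1 \<and> u ! i \<le> u ! Suc i + 1) \<longleftrightarrow> ok u"
proof (induction u rule: ok.induct)
  case (3 a b r)
  show ?case
    apply (subst all_nat_split)
    using 3 by simp
qed auto

lemma motz_ok: "motz u \<longleftrightarrow> u \<noteq> [] \<and> hd u = 0 \<and> last u = 0 \<and> ok u"
  unfolding motz_def idx_ok ..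

lemma ok_Cons: "ok (a#r) \<longleftrightarrow> ok r \<and> (r = [] \<or> (hd r \<le> Suc a \<and> a \<le> Suc (hd r)))"
  by (cases r) auto

lemma IU_props: "x \<in># IU u \<Longrightarrow> x \<noteq> [] \<and> hd x = hd u \<and> last x = last u \<and> (ok u \<longrightarrow> ok x)"
proof (induction u arbitrary: x)
  case Nil
  then show ?case by simp
next
  case (Cons a r)
  from Cons.prems consider "x = a#a#r" | "x = a#Suc a#a#r" | x' where "x = a#x'" "x' \<in># IU r"
    by auto
  then show ?case
  proof cases
    case 3
    then have "r \<noteq> []" by (cases r) auto
    with Cons.IH[OF 3(2)] 3(1) show ?thesis by (auto simp: ok_Cons)
  qed auto
qed

lemma loc_props: "y \<in># loc a z \<Longrightarrow> y \<noteq> [] \<and> hd y = a \<and> last y = last (a#z) \<and> (ok (a#z) \<longrightarrow> ok y)"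
proof (cases z rule: remdups_adj.cases)
  case (3 b c s)
  assume y: "y \<in># loc a z"
  show ?thesis using y 3 by (cases s) (auto split: if_splits)
qed (auto split: if_splits)

lemma RV_props: "y \<in># RV x \<Longrightarrow> y \<noteq> [] \<and> hd y = hd x \<and> last y = last x \<and> (ok x \<longrightarrow> ok y)"
proof (induction x arbitrary: y)
  case Nil
  then show ?case by simp
next
  case (Cons a z)
  from Cons.prems consider "y \<in># loc a z" | y' where "y = a#y'" "y' \<in># RV z"
    by auto
  then show ?case
  proof cases
    case 1
    then show ?thesis using loc_props by simp
  next
    case 2
    then have "z \<noteq> []" by auto
    with Cons.IH[OF 2(2)] 2(1) show ?thesis by (auto simp: ok_Cons)
  qed
qed

lemma motz_IU: "motz u \<Longrightarrow> x \<in># IU u \<Longrightarrow> motz x"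
  using IU_props motz_ok by metis

lemma motz_RV: "motz u \<Longrightarrow> x \<in># RV u \<Longrightarrow> motz x"
  using RV_props motz_ok by metis

definition Sset :: "nat list \<Rightarrow> nat set" where
  "Sset u = {i. Suc i < length u \<and> u ! i \<noteq> u ! Suc i}"

fun chg :: "nat list \<Rightarrow> nat" where
  "chg [] = 0"
| "chg [a] = 0"
| "chg (a#b#s) = (if a \<noteq> b then 1 else 0) + chg (b#s)"

lemma Sset_Cons2: "Sset (a#b#r) = (if a \<noteq> b then insert 0 (Suc ` Sset (b#r)) else Suc ` Sset (b#r))"
proof -
  have "i \<in> Sset (a#b#r) \<longleftrightarrow> i \<in> (if a \<noteq> b then insert 0 (Suc ` Sset (b#r)) else Suc ` Sset (b#r))" for i
    by (cases i) (auto simp: Sset_def)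
  then show ?thesis by blast
qed

lemma finite_Sset: "finite (Sset u)"
  unfolding Sset_def by (rule finite_subset[of _ "{..<length u}"]) auto

lemma card_Sset: "card (Sset u) = chg u"
proof (induction u rule: chg.induct)
  case 1 then show ?case by (simp add: Sset_def)
next
  case (2 a) then show ?case by (simp add: Sset_def)
next
  case (3 a b s)
  have c: "card (Suc ` Sset (b#s)) = card (Sset (b#s))" by (simp add: card_image)
  show ?case using 3 c finite_Sset[of "b#s"] by (simp add: Sset_Cons2 card_insert_if)
qed

lemma chg_desc: "ok u \<Longrightarrow> u \<noteq> [] \<Longrightarrow> int (chg u) + int (hd u) = 2 * int (desc u) + int (last u)"
  by (induction u rule: ok.induct) auto

lemma card_motz: "motz u \<Longrightarrow> card (Sset u) = 2 * desc u"
  using chg_desc[of u] card_Sset[of u] motz_ok[of u] by simp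

lemma CNT: "finite T \<Longrightarrow> set_mset M \<subseteq> T \<Longrightarrow>
  count (\<Sum>\<^sub># (image_mset g M)) w = (\<Sum>x\<in>T. count M x * count (g x) w)"
proof (induction M)
  case empty
  then show ?case by simp
next
  case (add a M)
  have "(\<Sum>x\<in>T. count (add_mset a M) x * count (g x) w)
      = (\<Sum>x\<in>T. count M x * count (g x) w + (if x = a then count (g x) w else 0))"
    by (rule sum.cong) auto
  also have "\<dots> = (\<Sum>x\<in>T. count M x * count (g x) w) + count (g a) w"
    using add.prems by (simp add: sum.distrib)
  finally show ?case using add by simp
qed

lemma main_count: "u \<noteq> [] \<Longrightarrow> count (SR (IU u)) w = count (SI (RV u)) w + (if w = u then 2 + 2 * desc u else 0)"
  using main[of u] by simp


lemma U_op_eq: "U_op f x = (\<Sum>u\<in>{u. motz u \<and> f u \<noteq> 0}. f u * of_nat (count (IU u) x))"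
  unfolding U_op_def by (simp add: count_mset[symmetric] mset_U_list)

lemma Vstar_op_eq: "Vstar_op g w = (if motz w then
   (\<Sum>x\<in>{x. motz x \<and> g x \<noteq> 0}. g x * of_nat (count (RV x) w)) else 0)"
  unfolding Vstar_op_def by (simp add: count_mset[symmetric] V_dual)

theorem proposition4p9:
  fixes f :: "nat list \<Rightarrow> 'k::field_char_0"
  assumes "in_KMotz f"
  shows "(\<lambda>w. Vstar_op (U_op f) w - U_op (Vstar_op f) w) = phi_op f"
proof
  fix w
  define S where "S = {u. motz u \<and> f u \<noteq> 0}"
  have finS: "finite S"
    using assms unfolding in_KMotz_def S_def by (auto intro: finite_subset)
  have Sm: "u \<in> S \<Longrightarrow> motz u" for u unfolding S_def by simp
  have Uf: "U_op f x = (\<Sum>u\<in>S. f u * of_nat (count (IU u) x))" for x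
    unfolding U_op_eq S_def ..
  define T1 where "T1 = (\<Union>u\<in>S. set_mset (IU u))"
  have finT1: "finite T1" unfolding T1_def using finS by simp
  have T1m: "x \<in> T1 \<Longrightarrow> motz x" for x unfolding T1_def using Sm motz_IU by blast
  define T2 where "T2 = (\<Union>u\<in>S. set_mset (RV u))"
  have finT2: "finite T2" unfolding T2_def using finS by simp
  have T2m: "x \<in> T2 \<Longrightarrow> motz x" for x unfolding T2_def using Sm motz_RV by blast
  have Vf: "Vstar_op f y = (if motz y then (\<Sum>x\<in>S. f x * of_nat (count (RV x) y)) else 0)" for y
    unfolding Vstar_op_eq S_def ..

  have L1: "Vstar_op (U_op f) w = (\<Sum>u\<in>S. f u * of_nat (count (SR (IU u)) w))" if mw: "motz w"
  proof -
    have A1: "{x. motz x \<and> U_op f x \<noteq> 0} \<subseteq> T1"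
    proof
      fix x assume x: "x \<in> {x. motz x \<and> U_op f x \<noteq> 0}"
      show "x \<in> T1"
      proof (rule ccontr)
        assume "x \<notin> T1"
        then have "\<forall>u\<in>S. count (IU u) x = 0" unfolding T1_def by (auto simp: not_in_iff)
        then have "U_op f x = 0" unfolding Uf by simp
        with x show False by simp
      qed
    qed
    have "Vstar_op (U_op f) w = (\<Sum>x\<in>{x. motz x \<and> U_op f x \<noteq> 0}. U_op f x * of_nat (count (RV x) w))"
      unfolding Vstar_op_eq using mw by simp
    also have "\<dots> = (\<Sum>x\<in>T1. U_op f x * of_nat (count (RV x) w))"
      by (rule sum.mono_neutral_left[OF finT1 A1]) (auto dest: T1m)
    also have "\<dots> = (\<Sum>x\<in>T1. \<Sum>u\<in>S. f u * (of_nat (count (IU u) x * count (RV x) w)))"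
      unfolding Uf by (simp add: sum_distrib_right mult.assoc)
    also have "\<dots> = (\<Sum>u\<in>S. f u * of_nat (\<Sum>x\<in>T1. count (IU u) x * count (RV x) w))"
      by (subst sum.swap) (simp add: sum_distrib_left)
    also have "\<dots> = (\<Sum>u\<in>S. f u * of_nat (count (SR (IU u)) w))"
    proof (rule sum.cong[OF refl])
      fix u assume "u \<in> S"
      then have "set_mset (IU u) \<subseteq> T1" unfolding T1_def by auto
      then have "count (SR (IU u)) w = (\<Sum>x\<in>T1. count (IU u) x * count (RV x) w)"
        unfolding SR_def by (rule CNT[OF finT1])
      then show "f u * of_nat (\<Sum>x\<in>T1. count (IU u) x * count (RV x) w) = f u * of_nat (count (SR (IU u)) w)"
        by simp
    qed
    finally show ?thesis .
  qed

  have L2: "U_op (Vstar_op f) w = (\<Sum>u\<in>S. f u * of_nat (count (SI (RV u)) w))"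
  proof -
    have A2: "{y. motz y \<and> Vstar_op f y \<noteq> 0} \<subseteq> T2"
    proof
      fix y assume y: "y \<in> {y. motz y \<and> Vstar_op f y \<noteq> 0}"
      show "y \<in> T2"
      proof (rule ccontr)
        assume "y \<notin> T2"
        then have "\<forall>u\<in>S. count (RV u) y = 0" unfolding T2_def by (auto simp: not_in_iff)
        then have "Vstar_op f y = 0" unfolding Vf by simp
        with y show False by simp
      qed
    qed
    have "U_op (Vstar_op f) w = (\<Sum>y\<in>{y. motz y \<and> Vstar_op f y \<noteq> 0}. Vstar_op f y * of_nat (count (IU y) w))"
      unfolding U_op_eq ..
    also have "\<dots> = (\<Sum>y\<in>T2. Vstar_op f y * of_nat (count (IU y) w))"
      by (rule sum.mono_neutral_left[OF finT2 A2]) (auto dest: T2m)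
    also have "\<dots> = (\<Sum>y\<in>T2. \<Sum>u\<in>S. f u * (of_nat (count (RV u) y * count (IU y) w)))"
      by (rule sum.cong[OF refl]) (simp add: Vf T2m sum_distrib_right mult.assoc)
    also have "\<dots> = (\<Sum>u\<in>S. f u * of_nat (\<Sum>y\<in>T2. count (RV u) y * count (IU y) w))"
      by (subst sum.swap) (simp add: sum_distrib_left)
    also have "\<dots> = (\<Sum>u\<in>S. f u * of_nat (count (SI (RV u)) w))"
    proof (rule sum.cong[OF refl])
      fix u assume "u \<in> S"
      then have "set_mset (RV u) \<subseteq> T2" unfolding T2_def by auto
      then have "count (SI (RV u)) w = (\<Sum>y\<in>T2. count (RV u) y * count (IU y) w)"
        unfolding SI_def by (rule CNT[OF finT2])
      then show "f u * of_nat (\<Sum>y\<in>T2. count (RV u) y * count (IU y) w) = f u * of_nat (count (SI (RV u)) w)"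
        by simp
    qed
    finally show ?thesis .
  qed

  show "Vstar_op (U_op f) w - U_op (Vstar_op f) w = phi_op f w"
  proof (cases "motz w")
    case True
    have "Vstar_op (U_op f) w - U_op (Vstar_op f) w
        = (\<Sum>u\<in>S. f u * of_nat (count (SR (IU u)) w) - f u * of_nat (count (SI (RV u)) w))"
      unfolding L1[OF True] L2 by (simp add: sum_subtractf)
    also have "\<dots> = (\<Sum>u\<in>S. if w = u then f u * of_nat (2 + 2 * desc u) else 0)"
    proof (rule sum.cong[OF refl])
      fix u assume "u \<in> S"
      then have "u \<noteq> []" using Sm motz_def by blast
      then show "f u * of_nat (count (SR (IU u)) w) - f u * of_nat (count (SI (RV u)) w)
          = (if w = u then f u * of_nat (2 + 2 * desc u) else 0)"
        by (simp add: main_count algebra_simps)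
    qed
    also have "\<dots> = (if w \<in> S then f w * of_nat (2 + 2 * desc w) else 0)"
      using finS by (simp add: sum.delta)
    also have "\<dots> = phi_op f w"
      unfolding phi_op_def using True card_motz[OF True] unfolding Sset_def S_def
      by (auto simp: mult.commute)
    finally show ?thesis .
  next
    case False
    have "count (SI (RV u)) w = 0" if "u \<in> S" for u
    proof -
      have "\<not> w \<in># SI (RV u)"
      proof
        assume "w \<in># SI (RV u)"
        then obtain y where "y \<in># RV u" "w \<in># IU y" unfolding SI_def by auto
        then show False using False motz_IU motz_RV Sm[OF that] by blast
      qed
      then show ?thesis by (simp add: not_in_iff)
    qed
    then have "U_op (Vstar_op f) w = 0" unfolding L2 by simp
    then show ?thesis using False unfolding phi_op_def Vstar_op_def by simp
  qed
qed

end
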